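(* Let $q$ be a prime power, $n\geq 1$, and $c\in\mathbb{F}_q\setminus\{1\}$. Let $f_1,\ldots,f_n:\mathbb{F}_q\to\mathbb{F}_q$ be functions with $c$-differential uniformities $\delta_1,\ldots,\delta_n$ respectively. Let $\{\beta_1,\ldots,\beta_n\}$ be a basis of $\mathbb{F}_{q^n}$ over $\mathbb{F}_q$, let $A$ be the $n\times n$ matrix with $(i,j)$ entry $\beta_i^{q^{j-1}}$, write $A^{-1}=(a_{i,j})_{i,j}$, and for $1\leq k\leq n$ let $L_k(x)=\sum_{i=1}^n a_{i,k}x^{q^{i-1}}$. Then $F:\mathbb{F}_{q^n}\to\mathbb{F}_{q^n}$, $F(x)=\sum_{k=1}^n\beta_k f_k(L_k(x))$, has $c$-differential uniformity equal to $\prod_{i=1}^n\delta_i$.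
   Context: For a finite field $K$, a function $h:K\to K$ and $c\in K$, let ${}_c\Delta_h(a,b)=\#\{x\in K: h(x+a)-ch(x)=b\}$ and the $c$-differential uniformity is $\delta_{h,c}=\max\{{}_c\Delta_h(a,b): a,b\in K,\ a\neq 0\text{ if } c=1\}$. The matrix $A$ is nonsingular, and $L_k(\sum_i\beta_ix_i)=x_k$ for $x_i\in\mathbb{F}_q$. *)

theory Defs
  imports Main
begin

definition is_subfield :: "'a::field set \<Rightarrow> bool" where
  "is_subfield K \<longleftrightarrow> 0 \<in> K \<and> 1 \<in> K \<and>
     (\<forall>x\<in>K. \<forall>y\<in>K. x + y \<in> K \<and> x - y \<in> K \<and> x * y \<in> K) \<and>
     (\<forall>x\<in>K. inverse x \<in> K)"

definition is_basis_over :: "'a::field set \<Rightarrow> nat \<Rightarrow> (nat \<Rightarrow> 'a) \<Rightarrow> bool" where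
  "is_basis_over K n beta \<longleftrightarrow>
     (\<forall>x. \<exists>!v. (\<forall>i<n. v i \<in> K) \<and> (\<forall>i. n \<le> i \<longrightarrow> v i = 0) \<and>
                x = (\<Sum>i<n. v i * beta i))"

definition cDelta :: "'a::field set \<Rightarrow> ('a \<Rightarrow> 'a) \<Rightarrow> 'a \<Rightarrow> 'a \<Rightarrow> 'a \<Rightarrow> nat" where
  "cDelta K h c a b = card {x \<in> K. h (x + a) - c * h x = b}"

definition c_diff_unif :: "'a::field set \<Rightarrow> ('a \<Rightarrow> 'a) \<Rightarrow> 'a \<Rightarrow> nat" where
  "c_diff_unif K h c =
     Max ((\<lambda>(a, b). cDelta K h c a b) ` {(a, b). a \<in> K \<and> b \<in> K \<and> (c = 1 \<longrightarrow> a \<noteq> 0)})"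

end

theory Submission imports Defs "HOL-Library.FuncSet" "HOL-Computational_Algebra.Primes" "HOL-Number_Theory.Cong" begin

definition addcl :: "'a::field set \<Rightarrow> bool" where
  "addcl H \<longleftrightarrow> 0 \<in> H \<and> (\<forall>x\<in>H. \<forall>y\<in>H. x + y \<in> H)"

lemma nmul_in: assumes "addcl H" "y \<in> H" shows "of_nat k * y \<in> H"
  using assms by (induction k) (auto simp: addcl_def distrib_right)

lemma CHAR_prime_fin: "prime CHAR('a::{field,finite})"
  by (simp add: finite_imp_CHAR_pos prime_CHAR_semidom)

lemma of_nat_mod_CHAR: "(of_nat (k mod CHAR('a)) :: 'a::field) = of_nat k"
proof -
  have "(of_nat k :: 'a) = of_nat (k mod CHAR('a) + CHAR('a) * (k div CHAR('a)))" by (simp only: mod_mult_div_eq)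
  also have "\<dots> = of_nat (k mod CHAR('a))" by (simp only: of_nat_add of_nat_mult of_nat_CHAR) simp
  finally show ?thesis by simp
qed

lemma of_nat_inj_CHAR: assumes "i < CHAR('a::field)" "j < CHAR('a)" "(of_nat i :: 'a) = of_nat j"
  shows "i = j"
proof (rule ccontr)
  assume ne: "i \<noteq> j"
  { fix i j :: nat assume "i < j" "j < CHAR('a)" "(of_nat i :: 'a) = of_nat j"
    then have "(of_nat (j - i) :: 'a) = 0" by (simp add: of_nat_diff)
    then have "CHAR('a) dvd (j - i)" by (simp add: of_nat_eq_0_iff_char_dvd)
    with \<open>i < j\<close> \<open>j < CHAR('a)\<close> have False by (meson diff_less_Suc less_Suc_eq_le nat_dvd_not_less zero_less_diff dual_order.strict_trans2 diff_le_self)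
  }
  with assms ne show False by (metis linorder_neqE_nat)
qed

lemma minus_of_nat: "- (y::'a::{field,finite}) = of_nat (CHAR('a) - 1) * y"
proof -
  have p: "CHAR('a) \<ge> 1" using finite_imp_CHAR_pos[where 'a='a] by simp
  have "(of_nat (CHAR('a) - 1) :: 'a) = of_nat CHAR('a) - 1" using p by (simp add: of_nat_diff)
  then show ?thesis by simp
qed

lemma inverse_of_nat: fixes d :: "'a::{field,finite}"
  assumes "d = of_nat m" "d \<noteq> 0" shows "\<exists>k. inverse d = of_nat k"
proof -
  have "coprime m CHAR('a)"
  proof -
    have "\<not> CHAR('a) dvd m" using assms by (simp add: of_nat_eq_0_iff_char_dvd)
    then show ?thesis using CHAR_prime_fin[where 'a='a]
      by (metis prime_imp_coprime coprime_commute)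
  qed
  then obtain k where "[m * k = 1] (mod CHAR('a))"
    using cong_solve_coprime_nat by auto
  hence "(of_nat (m*k)::'a) = of_nat 1" by (simp only: of_nat_eq_iff_cong_CHAR)
  hence "d * of_nat k = 1" using assms by simp
  thus ?thesis by (metis inverse_unique)
qed

lemma grow: fixes K H :: "'a::{field,finite} set"
  assumes "addcl H" "H \<subseteq> K" "addcl K" shows "\<exists>e. card K = card H * CHAR('a)^e"
  using assms
proof (induction "card K - card H" arbitrary: H rule: less_induct)
  case less
  show ?case
  proof (cases "H = K")
    case True then show ?thesis by (auto intro: exI[of _ 0])
  next
    case False
    then obtain x where x: "x \<in> K" "x \<notin> H" using less.prems by blast
    define p where "p = CHAR('a)"
    define g where "g = (\<lambda>(h,i). h + of_nat i * x)"
    define H' where "H' = g ` (H \<times> {..<p})"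
    have p1: "p > 1" using CHAR_prime_fin prime_gt_1_nat p_def by metis
    have HH': "H \<subseteq> H'"
    proof
      fix h assume "h \<in> H"
      then have "(h,0) \<in> H \<times> {..<p}" using p1 by auto
      then have "g (h,0) \<in> H'" unfolding H'_def by blast
      then show "h \<in> H'" by (simp add: g_def)
    qed
    have sub: "H' \<subseteq> K"
    proof
      fix y assume "y \<in> H'"
      then obtain h i where hi: "h \<in> H" "y = h + of_nat i * x" unfolding H'_def g_def by auto
      have "h \<in> K" using hi less.prems by auto
      moreover have "of_nat i * x \<in> K" using nmul_in less.prems x by blast
      ultimately show "y \<in> K" using hi less.prems unfolding addcl_def by auto
    qed
    have cl: "addcl H'"
      unfolding addcl_def
    proof (intro conjI ballI)
      show "0 \<in> H'" using HH' less.prems unfolding addcl_def by auto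
      fix y z assume "y \<in> H'" "z \<in> H'"
      then obtain h i h' j where hi: "h \<in> H" "y = h + of_nat i * x" "h' \<in> H" "z = h' + of_nat j * x"
        unfolding H'_def g_def by auto
      have "y + z = (h + h') + of_nat (i + j) * x" using hi by (simp add: algebra_simps)
      also have "\<dots> = g (h + h', (i + j) mod p)" by (simp add: g_def p_def of_nat_mod_CHAR)
      finally have "y + z = g (h + h', (i + j) mod p)" .
      moreover have "(h + h', (i + j) mod p) \<in> H \<times> {..<p}" using hi less.prems p1 unfolding addcl_def by auto
      ultimately show "y + z \<in> H'" unfolding H'_def by blast
    qed
    have inj: "inj_on g (H \<times> {..<p})"
    proof (rule inj_onI)
      fix u v assume uv: "u \<in> H \<times> {..<p}" "v \<in> H \<times> {..<p}" "g u = g v"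
      obtain h i h' j where hv: "u = (h, i)" "v = (h', j)" by (cases u, cases v) auto
      have A: "h \<in> H" "i \<in> {..<p}" "h' \<in> H" "j \<in> {..<p}" "g (h, i) = g (h', j)" using uv hv by auto
      then have eq: "h + of_nat i * x = h' + of_nat j * x" by (simp add: g_def)
      have ij: "i = j"
      proof (rule ccontr)
        assume "i \<noteq> j"
        define d :: 'a where "d = of_nat i - of_nat j"
        have "d \<noteq> 0" using of_nat_inj_CHAR[of i j] A \<open>i \<noteq> j\<close> by (auto simp: d_def p_def)
        have "d = of_nat i + of_nat (p - 1) * of_nat j" using minus_of_nat[of "of_nat j :: 'a"]
          by (simp add: d_def p_def)
        also have "\<dots> = of_nat (i + (p - 1) * j)" by simp
        finally obtain k where k: "inverse d = of_nat k" using inverse_of_nat \<open>d \<noteq> 0\<close> by blast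
        have "d * x = h' - h" using eq by (simp add: d_def algebra_simps)
        also have "\<dots> = h' + of_nat (p - 1) * h" using minus_of_nat[of h] by (simp add: p_def)
        finally have dx: "d * x = h' + of_nat (p - 1) * h" .
        have "of_nat (p - 1) * h \<in> H" using nmul_in[of H h] A less.prems by blast
        then have "h' + of_nat (p - 1) * h \<in> H" using A less.prems unfolding addcl_def by blast
        then have "of_nat k * (d * x) \<in> H" using dx nmul_in less.prems by metis
        moreover have "of_nat k * (d * x) = x" using k \<open>d \<noteq> 0\<close>
          by (metis mult.assoc inverse_unique mult.commute right_inverse mult_1)
        ultimately show False using x by simp
      qed
      then show "u = v" using eq hv by simp
    qed
    have card: "card H' = card H * p"
      unfolding H'_def by (simp add: card_image[OF inj] card_cartesian_product)
    have "card H > 0" using less.prems unfolding addcl_def by (auto simp: card_gt_0_iff)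
    then have lt: "card H < card H'" using card p1 by simp
    have le: "card H' \<le> card K" using sub by (simp add: card_mono)
    have "card K - card H' < card K - card H" using lt le by simp
    then obtain e where "card K = card H' * CHAR('a)^e" using less.hyps cl sub less.prems by blast
    then have "card K = card H * CHAR('a)^(Suc e)" using card by (simp add: p_def)
    then show ?thesis by blast
  qed
qed

lemma subfield_card_pow:
  fixes K :: "'a::{field,finite} set"
  assumes K: "is_subfield K" shows "\<exists>e. card K = CHAR('a)^e"
proof -
  have "addcl {0::'a}" "{0} \<subseteq> K" "addcl K" using K unfolding addcl_def is_subfield_def by auto
  from grow[OF this] show ?thesis by simp
qed

lemma subfield_pow_card:
  fixes K :: "'a::{field,finite} set"
  assumes K: "is_subfield K" and x: "x \<in> K" shows "x ^ card K = x"
proof (cases "x = 0")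
  case True
  have "card K > 0" using K unfolding is_subfield_def by (auto simp: card_gt_0_iff)
  then show ?thesis using True by simp
next
  case False
  have fin: "finite K" by simp
  have cl: "\<And>u v. u \<in> K \<Longrightarrow> v \<in> K \<Longrightarrow> u * v \<in> K" "\<And>u. u \<in> K \<Longrightarrow> inverse u \<in> K"
    using K unfolding is_subfield_def by auto
  have "(\<Prod>y\<in>K-{0}. x * y) = x ^ card (K - {0}) * \<Prod>(K-{0})"
    by (simp add: prod.distrib)
  moreover have "(\<Prod>y\<in>K-{0}. x * y) = (\<Prod>y\<in>K-{0}. y)"
    by (rule prod.reindex_bij_witness[of _ "\<lambda>y. y / x" "\<lambda>y. x * y"])
       (use False x cl in \<open>auto simp: divide_inverse\<close>)
  moreover have "\<Prod>(K-{0}) \<noteq> 0" by simp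
  ultimately have "x ^ card (K - {0}) = 1" by simp
  moreover have "card K = Suc (card (K - {0}))"
    using K unfolding is_subfield_def by (metis card_Suc_Diff1 fin)
  ultimately show ?thesis by simp
qed

lemma subfield_pow_card_pow:
  fixes K :: "'a::{field,finite} set"
  assumes K: "is_subfield K" and x: "x \<in> K" shows "x ^ (card K ^ i) = x"
proof (induction i)
  case (Suc i)
  have "x ^ (card K ^ Suc i) = (x ^ card K) ^ (card K ^ i)" by (simp add: power_mult)
  then show ?case using Suc subfield_pow_card[OF K x] by simp
qed simp

theorem theorem3p1:
  fixes K :: "'a::{field,finite} set"
    and q n :: nat
    and c :: 'a
    and f :: "nat \<Rightarrow> 'a \<Rightarrow> 'a"
    and beta :: "nat \<Rightarrow> 'a"
    and a :: "nat \<Rightarrow> nat \<Rightarrow> 'a"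
  assumes K: "is_subfield K"
    and q: "card K = q"
    and n: "n \<ge> 1"
    and cK: "c \<in> K" and c1: "c \<noteq> 1"
    and fK: "\<And>k x. k < n \<Longrightarrow> x \<in> K \<Longrightarrow> f k x \<in> K"
    and basis: "is_basis_over K n beta"
    and inv_right: "\<And>i j. i < n \<Longrightarrow> j < n \<Longrightarrow>
        (\<Sum>l<n. beta i ^ (q ^ l) * a l j) = (if i = j then 1 else 0)"
    and inv_left: "\<And>i j. i < n \<Longrightarrow> j < n \<Longrightarrow>
        (\<Sum>l<n. a i l * beta l ^ (q ^ j)) = (if i = j then 1 else 0)"
  shows "c_diff_unif (UNIV :: 'a set)
           (\<lambda>x. \<Sum>k<n. beta k * f k (\<Sum>i<n. a i k * x ^ (q ^ i))) c
         = (\<Prod>k<n. c_diff_unif K (f k) c)"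
proof -
  have Kcl: "\<And>u v. u \<in> K \<Longrightarrow> v \<in> K \<Longrightarrow> u + v \<in> K \<and> u - v \<in> K \<and> u * v \<in> K" "0 \<in> K"
    using K unfolding is_subfield_def by auto
  define P where "P x v \<longleftrightarrow> (\<forall>i<n. v i \<in> K) \<and> (\<forall>i. n \<le> i \<longrightarrow> v i = 0) \<and> x = (\<Sum>i<n. v i * beta i)" for x v
  have ex1: "\<exists>!v. P x v" for x using basis unfolding is_basis_over_def P_def by blast
  define co where "co x = (THE v. P x v)" for x
  have Pco: "P x (co x)" for x unfolding co_def using ex1 by (rule theI')
  have couniq: "P x v \<Longrightarrow> co x = v" for x v unfolding co_def using ex1 by (metis the1_equality)
  have coK: "k < n \<Longrightarrow> co x k \<in> K" for x k using Pco unfolding P_def by blast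
  have coz: "n \<le> k \<Longrightarrow> co x k = 0" for x k using Pco unfolding P_def by blast
  have cosum: "x = (\<Sum>i<n. co x i * beta i)" for x using Pco unfolding P_def by blast
  obtain e where e: "q = CHAR('a) ^ e" using subfield_card_pow[OF K] q by metis
  have frob: "(\<Sum>j<n. g j) ^ (q ^ i) = (\<Sum>j<n. g j ^ (q ^ i))" for g :: "nat \<Rightarrow> 'a" and i
    by (rule freshmans_dream_sum'[where n = "e * i"]) (simp_all add: CHAR_prime_fin e power_mult)
  have Kfix: "y \<in> K \<Longrightarrow> y ^ (q ^ i) = y" for y i using subfield_pow_card_pow[OF K] q by blast
  have L: "(\<Sum>i<n. a i k * x ^ (q ^ i)) = co x k" if k: "k < n" for x k
  proof -
    have xp: "x ^ (q ^ i) = (\<Sum>j<n. co x j * beta j ^ (q ^ i))" for i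
    proof -
      have "x ^ (q ^ i) = (\<Sum>j<n. co x j * beta j) ^ (q ^ i)" using cosum[of x] by simp
      also have "\<dots> = (\<Sum>j<n. (co x j * beta j) ^ (q ^ i))" by (rule frob)
      also have "\<dots> = (\<Sum>j<n. co x j * beta j ^ (q ^ i))"
        by (rule sum.cong) (simp_all add: power_mult_distrib Kfix coK)
      finally show ?thesis .
    qed
    have "(\<Sum>i<n. a i k * x ^ (q ^ i)) = (\<Sum>i<n. \<Sum>j<n. co x j * (beta j ^ (q ^ i) * a i k))"
      by (simp add: xp sum_distrib_left mult_ac)
    also have "\<dots> = (\<Sum>j<n. co x j * (\<Sum>i<n. beta j ^ (q ^ i) * a i k))"
      by (subst sum.swap) (simp add: sum_distrib_left)
    also have "\<dots> = (\<Sum>j<n. co x j * (if j = k then 1 else 0))"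
      by (rule sum.cong) (simp_all add: inv_right k)
    also have "\<dots> = co x k" using k by (simp add: if_distrib sum.delta cong: if_cong)
    finally show ?thesis .
  qed
  define F where "F x = (\<Sum>k<n. beta k * f k (\<Sum>i<n. a i k * x ^ (q ^ i)))" for x
  have F: "F x = (\<Sum>k<n. beta k * f k (co x k))" for x
    unfolding F_def by (rule sum.cong) (simp_all add: L)
  have coadd: "co (x + y) = (\<lambda>i. co x i + co y i)" for x y
  proof (rule couniq)
    have "x + y = (\<Sum>i<n. co x i * beta i) + (\<Sum>i<n. co y i * beta i)" using cosum by metis
    also have "\<dots> = (\<Sum>i<n. (co x i + co y i) * beta i)" by (simp add: sum.distrib distrib_right)
    finally show "P (x + y) (\<lambda>i. co x i + co y i)" unfolding P_def using coK coz Kcl by auto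
  qed
  have colin: "co (\<Sum>k<n. v k * beta k) = (\<lambda>k. if k < n then v k else 0)" if v: "\<forall>k<n. v k \<in> K" for v
  proof (rule couniq)
    have "(\<Sum>k<n. v k * beta k) = (\<Sum>k<n. (if k < n then v k else 0) * beta k)" by simp
    then show "P (\<Sum>k<n. v k * beta k) (\<lambda>k. if k < n then v k else 0)"
      unfolding P_def using v Kcl by auto
  qed
  define D where "D a0 x k = f k (co x k + co a0 k) - c * f k (co x k)" for a0 x k
  have DK: "k < n \<Longrightarrow> D a0 x k \<in> K" for a0 x k
    unfolding D_def using fK coK Kcl cK by simp
  have diff: "F (x + a0) - c * F x = (\<Sum>k<n. D a0 x k * beta k)" for x a0
    by (simp add: F coadd D_def sum_subtractf sum_distrib_left algebra_simps)
  have iff: "F (x + a0) - c * F x = b0 \<longleftrightarrow> (\<forall>k<n. D a0 x k = co b0 k)" for x a0 b0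
  proof
    assume "F (x + a0) - c * F x = b0"
    then have "co b0 = (\<lambda>k. if k < n then D a0 x k else 0)" using diff colin DK by metis
    then show "\<forall>k<n. D a0 x k = co b0 k" by simp
  next
    assume "\<forall>k<n. D a0 x k = co b0 k"
    then have "(\<Sum>k<n. D a0 x k * beta k) = (\<Sum>k<n. co b0 k * beta k)" by simp
    then show "F (x + a0) - c * F x = b0" using diff cosum by metis
  qed
  have count: "cDelta UNIV F c a0 b0 = (\<Prod>k<n. cDelta K (f k) c (co a0 k) (co b0 k))" for a0 b0
  proof -
    define T where "T k = {y \<in> K. f k (y + co a0 k) - c * f k y = co b0 k}" for k
    define S where "S = {x. F (x + a0) - c * F x = b0}"
    have bij: "bij_betw (\<lambda>x. restrict (co x) {..<n}) S (PiE {..<n} T)"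
    proof (rule bij_betw_byWitness[of S "\<lambda>v. \<Sum>k<n. v k * beta k" "\<lambda>x. restrict (co x) {..<n}" "PiE {..<n} T"])
      show "\<forall>x\<in>S. (\<Sum>k<n. restrict (co x) {..<n} k * beta k) = x"
        using cosum by simp
      show "\<forall>v\<in>PiE {..<n} T. restrict (co (\<Sum>k<n. v k * beta k)) {..<n} = v"
      proof
        fix v assume v: "v \<in> PiE {..<n} T"
        then have "\<forall>k<n. v k \<in> K" unfolding T_def by auto
        from colin[OF this] v show "restrict (co (\<Sum>k<n. v k * beta k)) {..<n} = v"
          by (auto simp: restrict_def PiE_def extensional_def)
      qed
      show "(\<lambda>x. restrict (co x) {..<n}) ` S \<subseteq> PiE {..<n} T"
        using coK iff unfolding S_def T_def D_def by (auto simp: add.commute PiE_iff split: if_splits)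
      show "(\<lambda>v. \<Sum>k<n. v k * beta k) ` PiE {..<n} T \<subseteq> S"
      proof
        fix x assume "x \<in> (\<lambda>v. \<Sum>k<n. v k * beta k) ` PiE {..<n} T"
        then obtain v where v: "v \<in> PiE {..<n} T" and x: "x = (\<Sum>k<n. v k * beta k)" by blast
        then have "\<forall>k<n. v k \<in> K" unfolding T_def by auto
        from colin[OF this] have cx: "k < n \<Longrightarrow> co x k = v k" for k using x by simp
        have "\<forall>k<n. D a0 x k = co b0 k" using v cx unfolding D_def T_def by (auto simp: add.commute)
        then show "x \<in> S" using iff unfolding S_def by blast
      qed
    qed
    have "cDelta UNIV F c a0 b0 = card S" unfolding cDelta_def S_def by simp
    also have "\<dots> = card (PiE {..<n} T)" using bij by (rule bij_betw_same_card)
    also have "\<dots> = (\<Prod>k<n. card (T k))" by (simp add: card_PiE)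
    finally show ?thesis unfolding cDelta_def T_def by simp
  qed
  define M where "M k = c_diff_unif K (f k) c" for k
  have dom: "{(a, b). a \<in> K \<and> b \<in> K \<and> (c = 1 \<longrightarrow> a \<noteq> 0)} = K \<times> K" using c1 by auto
  have domU: "{(a, b). a \<in> (UNIV::'a set) \<and> b \<in> UNIV \<and> (c = 1 \<longrightarrow> a \<noteq> 0)} = UNIV" using c1 by auto
  have MK: "M k = Max ((\<lambda>(a,b). cDelta K (f k) c a b) ` (K \<times> K))" for k
    unfolding M_def c_diff_unif_def dom ..
  have Fl: "(\<lambda>x. \<Sum>k<n. beta k * f k (\<Sum>i<n. a i k * x ^ (q ^ i))) = F" by (rule ext) (simp add: F_def)
  have Mge: "cDelta K (f k) c u v \<le> M k" if "u \<in> K" "v \<in> K" for k u v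
    unfolding MK by (rule Max_ge) (use that in auto)
  have Min: "\<exists>ab. ab \<in> K \<times> K \<and> cDelta K (f k) c (fst ab) (snd ab) = M k" for k
  proof -
    have "M k \<in> (\<lambda>(a,b). cDelta K (f k) c a b) ` (K \<times> K)"
      unfolding MK by (rule Max_in) (use Kcl in auto)
    then show ?thesis by force
  qed
  then obtain ab where ab: "\<And>k. ab k \<in> K \<times> K \<and> cDelta K (f k) c (fst (ab k)) (snd (ab k)) = M k"
    by metis
  have "Max ((\<lambda>(a0, b0). cDelta UNIV F c a0 b0) ` UNIV) = (\<Prod>k<n. M k)"
  proof (rule Max_eqI)
    show "finite ((\<lambda>(a0, b0). cDelta UNIV F c a0 b0) ` UNIV)" by simp
    fix y assume "y \<in> (\<lambda>(a0, b0). cDelta UNIV F c a0 b0) ` UNIV"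
    then obtain a0 b0 where y: "y = cDelta UNIV F c a0 b0" by auto
    show "y \<le> (\<Prod>k<n. M k)" unfolding y count
      by (rule prod_mono) (simp add: Mge coK)
  next
    define a1 where "a1 = (\<Sum>k<n. fst (ab k) * beta k)"
    define b1 where "b1 = (\<Sum>k<n. snd (ab k) * beta k)"
    have ca: "k < n \<Longrightarrow> co a1 k = fst (ab k)" for k
      using colin[of "\<lambda>k. fst (ab k)"] ab unfolding a1_def by (auto simp: mem_Times_iff)
    have cb: "k < n \<Longrightarrow> co b1 k = snd (ab k)" for k
      using colin[of "\<lambda>k. snd (ab k)"] ab unfolding b1_def by (auto simp: mem_Times_iff)
    have "cDelta UNIV F c a1 b1 = (\<Prod>k<n. M k)" unfolding count
      by (rule prod.cong) (simp_all add: ca cb ab)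
    then show "(\<Prod>k<n. M k) \<in> (\<lambda>(a0, b0). cDelta UNIV F c a0 b0) ` UNIV"
      by (metis (mono_tags, lifting) UNIV_I case_prod_conv image_eqI)
  qed
  then show ?thesis unfolding Fl c_diff_unif_def domU M_def by simp
qed

end
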